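(* Let $k,l\geq 0$. In the $\mathbb{Q}$-vector space with basis the surjective maps $\sigma:[k+l]\twoheadrightarrow[p]$, $p\leq k+l$, the following identity holds: \[\sum_{\substack{\sigma'\in \mathrm{inc}(k),\ \sigma''\in \mathrm{inc}(l)\\ \tau \in \mathrm{qsh}(\max(\sigma'),\max(\sigma''))}}\frac{\tau\circ(\sigma' \otimes \sigma'')}{\sigma'!\,\sigma''!} =\sum_{\substack{\sigma\in \mathrm{sh}(k,l)\\ \tau\in \mathrm{inc}(k+l)}} \frac{\tau\circ \sigma}{\tau!}. \]
   Context: For $n\in\mathbb{N}$, $[n]=\{1,\dots,n\}$, $[0]=\emptyset$. For $k,l\geq 0$, a $(k,l)$-quasi-shuffle is a surjective map $\sigma:[k+l]\twoheadrightarrow[n]$ (for some $n$) with $\sigma(1)<\dots<\sigma(k)$ and $\sigma(k+1)<\dots<\sigma(k+l)$; $\mathrm{qsh}(k,l)$ is the set of these. $\mathrm{sh}(k,l)\subseteq\mathrm{qsh}(k,l)$ is the set of injective ones (shuffles, i.e. bijections $[k+l]\to[k+l]$). For $k\geq 0$, $\mathrm{inc}(k)$ is the set of surjective maps $\sigma:[k]\twoheadrightarrow[m]$ (some $m$) with $\sigma(1)\leq\dots\leq\sigma(k)$ (for $k=0$ it consists of the empty map, with $\max=0$). For a map $\sigma:[k]\to[m]$, $\sigma!=\prod_{i=1}^m|\sigma^{-1}(i)|!$, and $\max(\sigma)$ is its largest value ($0$ if $k=0$). For $\sigma':[k]\to[a]$ and $\sigma'':[l]\to[b]$, $\sigma'\otimes\sigma'':[k+l]\to[a+b]$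 is the map $i\mapsto\sigma'(i)$ for $i\leq k$ and $i\mapsto a+\sigma''(i-k)$ for $i>k$. *)

theory Defs
  imports Complex_Main "HOL-Library.Poly_Mapping"
begin

text \<open>A map \<sigma> : [n] \<rightarrow> [m] is encoded as the list [\<sigma>(1), ..., \<sigma>(n)] of its values
  (values are 1-based). It is surjective onto [m] iff its set of values is {1..m}.\<close>

definition surj_onto_interval :: "nat list \<Rightarrow> bool" where
  "surj_onto_interval xs \<longleftrightarrow> (\<exists>m. set xs = {1..m})"

definition mx :: "nat list \<Rightarrow> nat" where
  "mx xs = Max (insert 0 (set xs))"

definition qsh :: "nat \<Rightarrow> nat \<Rightarrow> nat list set" where
  "qsh k l = {xs. length xs = k + l \<and> surj_onto_interval xs
      \<and> sorted_wrt (<) (take k xs) \<and> sorted_wrt (<) (drop k xs)}"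

definition sh :: "nat \<Rightarrow> nat \<Rightarrow> nat list set" where
  "sh k l = {xs \<in> qsh k l. distinct xs}"

definition inc :: "nat \<Rightarrow> nat list set" where
  "inc k = {xs. length xs = k \<and> surj_onto_interval xs \<and> sorted xs}"

text \<open>\<sigma>! = product over the values i of |\<sigma>^{-1}(i)|! (values outside the image give 0! = 1)\<close>
definition map_fact :: "nat list \<Rightarrow> nat" where
  "map_fact xs = (\<Prod>i\<in>set xs. fact (count_list xs i))"

text \<open>\<sigma>' \<otimes> \<sigma>'' with \<sigma>' : [k] \<rightarrow> [mx \<sigma>']\<close>
definition tensor :: "nat list \<Rightarrow> nat list \<Rightarrow> nat list" where
  "tensor xs ys = xs @ map (\<lambda>y. mx xs + y) ys"

definition comp_map :: "nat list \<Rightarrow> nat list \<Rightarrow> nat list" where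
  "comp_map \<tau> \<sigma> = map (\<lambda>i. \<tau> ! (i - 1)) \<sigma>"

end

theory Submission
  imports Defs "HOL-Library.Multiset"
begin


lemma nths_filter: "nths t A = map (nth t) (filter (\<lambda>i. i \<in> A) [0..<length t])"
proof (induction t rule: rev_induct)
  case Nil then show ?case by simp
next
  case (snoc z t)
  have "map (nth (t @ [z])) (filter (\<lambda>i. i \<in> A) [0..<length t])
      = map (nth t) (filter (\<lambda>i. i \<in> A) [0..<length t])"
    by (intro map_cong) (auto simp: nth_append)
  then show ?case using snoc by (simp add: nths_append)
qed

lemma nths_cong: "(\<And>i. i < length t \<Longrightarrow> i \<in> A \<longleftrightarrow> i \<in> B) \<Longrightarrow> nths t A = nths t B"
  unfolding nths_filter by (intro arg_cong[where f="map _"] filter_cong) auto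

lemma nths_snoc: "nths (t @ [z]) A = nths t A @ (if length t \<in> A then [z] else [])"
  by (simp add: nths_append)

definition P :: "nat list \<Rightarrow> nat list \<Rightarrow> nat list \<Rightarrow> nat set set" where
  "P t u w = {A. A \<subseteq> {..<length t} \<and> nths t A = u \<and> nths t (- A) = w}"

lemma finite_P: "finite (P t u w)"
  by (rule finite_subset[of _ "Pow {..<length t}"]) (auto simp: P_def)

lemma P_Nil: "P [] u w = (if u = [] \<and> w = [] then {{}} else {})"
  by (auto simp: P_def)

lemma P_snoc:
  "P (t @ [z]) u w =
     insert (length t) ` (if u \<noteq> [] \<and> last u = z then P t (butlast u) w else {})
   \<union> (if w \<noteq> [] \<and> last w = z then P t u (butlast w) else {})"
  (is "?L = ?R1 \<union> ?R2")
proof (intro equalityI subsetI)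
  fix A assume A: "A \<in> ?L"
  let ?n = "length t"
  have sub: "A \<subseteq> {..<Suc ?n}" and u: "nths t A @ (if ?n \<in> A then [z] else []) = u"
    and w: "nths t (-A) @ (if ?n \<in> A then [] else [z]) = w"
    using A unfolding P_def nths_snoc by auto
  show "A \<in> ?R1 \<union> ?R2"
  proof (cases "?n \<in> A")
    case True
    have "nths t (A - {?n}) = nths t A" "nths t (- (A - {?n})) = nths t (- A)"
      by (auto intro: nths_cong)
    note e = this
    have "nths t (A - {?n}) = butlast u" using u True e(1) by auto
    moreover have "nths t (- (A - {?n})) = w" using w True e(2) by auto
    moreover have "A - {?n} \<subseteq> {..<?n}" using sub by auto
    ultimately have 1: "A - {?n} \<in> P t (butlast u) w" unfolding P_def by (intro CollectI conjI)
    have 3: "insert ?n (A - {?n}) \<in> insert ?n ` P t (butlast u) w" using 1 by (rule imageI)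
    have "A \<in> insert ?n ` P t (butlast u) w" using 3 True by (simp add: insert_absorb)
    moreover have "u \<noteq> [] \<and> last u = z" using u True by auto
    ultimately have "A \<in> ?R1" by simp
    then show ?thesis by blast
  next
    case False
    then have "nths t A = u" "nths t (- A) = butlast w" "A \<subseteq> {..<?n}" using sub u w
      by (auto simp: less_Suc_eq)
    then have "A \<in> P t u (butlast w)" unfolding P_def by (intro CollectI conjI)
    moreover have "w \<noteq> [] \<and> last w = z" using w False by auto
    ultimately show ?thesis by simp
  qed
next
  fix A assume A: "A \<in> ?R1 \<union> ?R2"
  let ?n = "length t"
  show "A \<in> ?L"
  proof (cases "A \<in> ?R2")
    case True
    then have c: "w \<noteq> []" "last w = z" and A': "A \<subseteq> {..<?n}" "nths t A = u" "nths t (-A) = butlast w"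
      by (auto simp: P_def split: if_splits)
    have "?n \<notin> A" using A' by auto
    moreover have "butlast w @ [z] = w" using c by (metis append_butlast_last_id)
    ultimately have "nths (t @ [z]) A = u" "nths (t @ [z]) (- A) = w"
      using A' by (simp_all add: nths_snoc)
    moreover have "A \<subseteq> {..<length (t @ [z])}" using A' by auto
    ultimately show ?thesis unfolding P_def by (intro CollectI conjI)
  next
    case False
    then obtain B where B: "A = insert ?n B" "B \<in> P t (butlast u) w" "u \<noteq> []" "last u = z"
      using A by (auto split: if_splits)
    have nB: "?n \<notin> B" using B by (auto simp: P_def)
    have "nths t A = nths t B" "nths t (- A) = nths t (- B)" using B(1) by (auto intro: nths_cong)
    note e = this
    have s: "A \<subseteq> {..<length (t @ [z])}" using B(1,2) by (auto simp: P_def)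
    have e4: "nths t B @ [z] = u" "nths t (- B) = w" using B(2,3,4) by (auto simp: P_def)
    have "nths (t @ [z]) A = u" unfolding nths_snoc e(1) using e4(1) B(1) by simp
    moreover have "nths (t @ [z]) (- A) = w" unfolding nths_snoc e(2) using e4(2) B(1) by simp
    ultimately show ?thesis using s unfolding P_def by (intro CollectI conjI)
  qed
qed

lemma card_P_snoc:
  "card (P (t @ [z]) u w) =
     (if u \<noteq> [] \<and> last u = z then card (P t (butlast u) w) else 0)
   + (if w \<noteq> [] \<and> last w = z then card (P t u (butlast w)) else 0)"
proof -
  let ?R1 = "insert (length t) ` (if u \<noteq> [] \<and> last u = z then P t (butlast u) w else {})"
  let ?R2 = "(if w \<noteq> [] \<and> last w = z then P t u (butlast w) else {})"
  have fin: "finite ?R1" "finite ?R2" using finite_P by auto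
  have dis: "?R1 \<inter> ?R2 = {}" by (auto simp: P_def split: if_splits)
  have inj: "inj_on (insert (length t)) (P t (butlast u) w)"
  proof (rule inj_onI)
    fix x y assume "x \<in> P t (butlast u) w" "y \<in> P t (butlast u) w"
      "insert (length t) x = insert (length t) y"
    moreover have "length t \<notin> x" "length t \<notin> y" using calculation by (auto simp: P_def)
    ultimately show "x = y" by (metis Diff_insert_absorb)
  qed
  have "card ?R1 = (if u \<noteq> [] \<and> last u = z then card (P t (butlast u) w) else 0)"
    using card_image[OF inj] by auto
  moreover have "card ?R2 = (if w \<noteq> [] \<and> last w = z then card (P t u (butlast w)) else 0)" by simp
  ultimately show ?thesis unfolding P_snoc using card_Un_disjoint[OF fin dis] by simp
qed


lemma map_fact_mset: "mset xs = mset ys \<Longrightarrow> map_fact xs = map_fact ys"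
  unfolding map_fact_def
  by (metis (no_types, lifting) count_mset mset_eq_setD prod.cong)

lemma map_fact_snoc: "map_fact (xs @ [z]) = map_fact xs * count_list (xs @ [z]) z"
proof (cases "z \<in> set xs")
  case True
  have s: "set (xs @ [z]) = set xs" using True by auto
  have "map_fact (xs @ [z]) = fact (count_list xs z + 1) * (\<Prod>i\<in>set xs - {z}. fact (count_list (xs @ [z]) i))"
    unfolding map_fact_def s by (subst prod.remove[OF _ True]) auto
  also have "(\<Prod>i\<in>set xs - {z}. fact (count_list (xs @ [z]) i)) = (\<Prod>i\<in>set xs - {z}. fact (count_list xs i))"
    by (intro prod.cong) auto
  also have "map_fact xs = fact (count_list xs z) * (\<Prod>i\<in>set xs - {z}. fact (count_list xs i))"
    unfolding map_fact_def by (subst prod.remove[OF _ True]) auto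
  ultimately show ?thesis by (simp add: algebra_simps)
next
  case False
  have s: "set (xs @ [z]) = insert z (set xs)" by auto
  have c: "count_list xs z = 0" using False by (simp add: count_list_0_iff)
  have "map_fact (xs @ [z]) = fact (count_list (xs @ [z]) z) * (\<Prod>i\<in>set xs. fact (count_list (xs @ [z]) i))"
    unfolding map_fact_def s using False by simp
  also have "(\<Prod>i\<in>set xs. fact (count_list (xs @ [z]) i)) = map_fact xs"
    unfolding map_fact_def using False by (intro prod.cong) auto
  finally show ?thesis using c by simp
qed

lemma sorted_le_last:
  assumes "sorted u" "x \<in> set u" shows "x \<le> last u"
proof -
  have ne: "u \<noteq> []" using assms by auto
  then have eq: "u = butlast u @ [last u]" by simp
  then have "sorted (butlast u @ [last u])" using assms(1) by simp
  moreover have "x \<in> set (butlast u @ [last u])" using assms(2) eq by simp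
  ultimately show ?thesis by (auto simp: sorted_append)
qed

lemma lastz_iff:
  fixes u :: "nat list"
  assumes "sorted u" "\<forall>x\<in>set u. x \<le> z"
  shows "(u \<noteq> [] \<and> last u = z) \<longleftrightarrow> count_list u z > 0"
proof
  assume "u \<noteq> [] \<and> last u = z" then show "count_list u z > 0"
    by (metis count_list_0_iff gr0I last_in_set)
next
  assume "count_list u z > 0"
  then have z: "z \<in> set u" using count_list_0_iff[of u z] by auto
  then have "u \<noteq> []" by auto
  moreover have "z \<le> last u" using sorted_le_last[OF assms(1) z] .
  moreover have "last u \<le> z" using assms(2) calculation(1) last_in_set by blast
  ultimately show "u \<noteq> [] \<and> last u = z" by simp
qed

lemma card_P_formula:
  "sorted t \<Longrightarrow> sorted u \<Longrightarrow> sorted w \<Longrightarrow> mset t = mset (u @ w) \<Longrightarrow>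
   card (P t u w) * map_fact u * map_fact w = map_fact t"
proof (induction t arbitrary: u w rule: rev_induct)
  case Nil
  then show ?case by (simp add: P_Nil map_fact_def)
next
  case (snoc z t)
  have st: "sorted t" using snoc.prems(1) by (simp add: sorted_append)
  have setuw: "set (u @ w) = set (t @ [z])" using snoc.prems(4) by (metis set_mset_mset)
  have le: "\<forall>x\<in>set (u @ w). x \<le> z" unfolding setuw
    using snoc.prems(1) by (auto simp: sorted_append)
  define a where "a = count_list u z"
  define b where "b = count_list w z"
  have cu: "(u \<noteq> [] \<and> last u = z) \<longleftrightarrow> a > 0"
    unfolding a_def by (rule lastz_iff) (use snoc.prems le in auto)
  have cw: "(w \<noteq> [] \<and> last w = z) \<longleftrightarrow> b > 0"
    unfolding b_def by (rule lastz_iff) (use snoc.prems le in auto)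
  have ct: "count_list (t @ [z]) z = a + b"
    unfolding a_def b_def by (metis count_list_append count_mset snoc.prems(4))
  have mft: "map_fact (t @ [z]) = map_fact t * (a + b)" unfolding ct[symmetric] by (rule map_fact_snoc)
  define N where "N = card (P (t @ [z]) u w)"
  define N1 where "N1 = card (P t (butlast u) w)"
  define N2 where "N2 = card (P t u (butlast w))"
  have N: "N = (if a > 0 then N1 else 0) + (if b > 0 then N2 else 0)"
    unfolding N_def N1_def N2_def card_P_snoc cu cw ..
  have A: "(if a > 0 then N1 else 0) * map_fact u * map_fact w = map_fact t * a"
  proof (cases "a > 0")
    case True
    then have ue: "u = butlast u @ [z]" using cu by (metis append_butlast_last_id)
    have mfu: "map_fact u = map_fact (butlast u) * a"
      using map_fact_snoc[of "butlast u" z] ue a_def by simp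
    have e1: "add_mset z (mset t) = mset u + mset w" using snoc.prems(4) by simp
    have e2: "mset u = add_mset z (mset (butlast u))" by (subst ue) simp
    have "mset t = mset (butlast u @ w)" using e1 unfolding e2 by simp
    moreover have "sorted (butlast u)" using snoc.prems(2) by (simp add: sorted_butlast)
    ultimately have "N1 * map_fact (butlast u) * map_fact w = map_fact t"
      unfolding N1_def using snoc.IH st snoc.prems by blast
    then show ?thesis unfolding mfu using True by (simp add: algebra_simps)
  qed simp
  have B: "(if b > 0 then N2 else 0) * map_fact u * map_fact w = map_fact t * b"
  proof (cases "b > 0")
    case True
    then have we: "w = butlast w @ [z]" using cw by (metis append_butlast_last_id)
    have mfw: "map_fact w = map_fact (butlast w) * b"
      using map_fact_snoc[of "butlast w" z] we b_def by simp
    have e1: "add_mset z (mset t) = mset u + mset w" using snoc.prems(4) by simp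
    have e2: "mset w = add_mset z (mset (butlast w))" by (subst we) simp
    have "mset t = mset (u @ butlast w)" using e1 unfolding e2 by simp
    moreover have "sorted (butlast w)" using snoc.prems(3) by (simp add: sorted_butlast)
    ultimately have "N2 * map_fact u * map_fact (butlast w) = map_fact t"
      unfolding N2_def using snoc.IH st snoc.prems by blast
    then show ?thesis unfolding mfw using True by (simp add: algebra_simps)
  qed simp
  have "N * map_fact u * map_fact w = map_fact t * (a + b)"
    using A B unfolding N by (simp add: algebra_simps)
  then show ?case unfolding N_def mft .
qed



definition shof :: "nat \<Rightarrow> nat set \<Rightarrow> nat list" where
  "shof n A = map Suc (filter (\<lambda>i. i \<in> A) [0..<n] @ filter (\<lambda>i. i \<notin> A) [0..<n])"

lemma comp_shof: "comp_map t (shof (length t) A) = nths t A @ nths t (-A)"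
  unfolding comp_map_def shof_def nths_filter by simp

lemma sh_facts:
  assumes "\<sigma> \<in> sh k l"
  shows "length \<sigma> = k + l" "set \<sigma> = {1..k+l}" "distinct \<sigma>"
    "sorted_wrt (<) (take k \<sigma>)" "sorted_wrt (<) (drop k \<sigma>)"
proof -
  from assms obtain m where "set \<sigma> = {1..m}" and d: "distinct \<sigma>" and len: "length \<sigma> = k + l"
    and "sorted_wrt (<) (take k \<sigma>)" "sorted_wrt (<) (drop k \<sigma>)"
    by (auto simp: sh_def qsh_def surj_onto_interval_def)
  moreover have "m = k + l"
    using distinct_card[OF d] len \<open>set \<sigma> = {1..m}\<close> by simp
  ultimately show "length \<sigma> = k + l" "set \<sigma> = {1..k+l}" "distinct \<sigma>"
    "sorted_wrt (<) (take k \<sigma>)" "sorted_wrt (<) (drop k \<sigma>)" by auto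
qed

lemma shof_in_sh:
  assumes "length (filter (\<lambda>i. i \<in> A) [0..<n]) = k" "n = k + l"
  shows "shof n A \<in> sh k l"
proof -
  let ?xs = "filter (\<lambda>i. i \<in> A) [0..<n]" and ?ys = "filter (\<lambda>i. i \<notin> A) [0..<n]"
  have l2: "length ?xs + length ?ys = n" using sum_length_filter_compl[of "\<lambda>i. i \<in> A" "[0..<n]"] by simp
  have len: "length (shof n A) = k + l" using l2 assms by (simp add: shof_def)
  have set: "set (shof n A) = {1..n}"
  proof -
    have "set (filter (\<lambda>i. i \<in> A) [0..<n]) \<union> set (filter (\<lambda>i. i \<notin> A) [0..<n]) = {0..<n}"
      by auto
    then have "set (shof n A) = Suc ` {0..<n}" unfolding shof_def set_map set_append image_Un[symmetric]
      by simp
    also have "\<dots> = {1..n}" by (simp add: image_Suc_atLeastLessThan atLeastLessThanSuc_atLeastAtMost)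
    finally show ?thesis .
  qed
  have tk: "take k (shof n A) = map Suc ?xs" using assms(1) by (simp add: shof_def)
  have dk: "drop k (shof n A) = map Suc ?ys" using assms(1) by (simp add: shof_def)
  have s1: "sorted_wrt (<) (map Suc ?xs)"
    by (simp add: sorted_wrt_map) (rule sorted_wrt_filter, simp)
  have s2: "sorted_wrt (<) (map Suc ?ys)"
    by (simp add: sorted_wrt_map) (rule sorted_wrt_filter, simp)
  have d: "distinct (shof n A)" unfolding shof_def by (auto simp: distinct_map)
  show ?thesis unfolding sh_def qsh_def surj_onto_interval_def
    using len set tk dk s1 s2 d assms(2) by auto
qed

lemma g_shof:
  assumes "A \<subseteq> {..<n}" "length (filter (\<lambda>i. i \<in> A) [0..<n]) = k"
  shows "{i. Suc i \<in> set (take k (shof n A))} = A"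
proof -
  have "take k (shof n A) = map Suc (filter (\<lambda>i. i \<in> A) [0..<n])" using assms(2) by (simp add: shof_def)
  then show ?thesis using assms(1) by auto
qed

lemma shof_g:
  assumes "\<sigma> \<in> sh k l"
  shows "map Suc (filter (\<lambda>i. Suc i \<in> set (take k \<sigma>)) [0..<k+l]) = take k \<sigma>"
    "map Suc (filter (\<lambda>i. Suc i \<notin> set (take k \<sigma>)) [0..<k+l]) = drop k \<sigma>"
    "shof (k + l) {i. Suc i \<in> set (take k \<sigma>)} = \<sigma>"
proof -
  note f = sh_facts[OF assms]
  have st: "set (take k \<sigma>) \<subseteq> {1..k+l}" using f(2) set_take_subset by metis
  have sd: "set (drop k \<sigma>) = {1..k+l} - set (take k \<sigma>)"
  proof -
    have "set \<sigma> = set (take k \<sigma>) \<union> set (drop k \<sigma>)" by (metis append_take_drop_id set_append)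
    moreover have "set (take k \<sigma>) \<inter> set (drop k \<sigma>) = {}"
      using set_take_disj_set_drop_if_distinct[OF f(3), of k k] by simp
    ultimately show ?thesis using f(2) by auto
  qed
  have e1: "set (map Suc (filter (\<lambda>i. Suc i \<in> set (take k \<sigma>)) [0..<k+l])) = set (take k \<sigma>)"
  proof
    show "set (map Suc (filter (\<lambda>i. Suc i \<in> set (take k \<sigma>)) [0..<k+l])) \<subseteq> set (take k \<sigma>)" by auto
    show "set (take k \<sigma>) \<subseteq> set (map Suc (filter (\<lambda>i. Suc i \<in> set (take k \<sigma>)) [0..<k+l]))"
    proof
      fix x assume x: "x \<in> set (take k \<sigma>)"
      then have "x \<in> {1..k+l}" using st by auto
      then have "x = Suc (x - 1)" "x - 1 < k + l" by auto
      then have "x - 1 \<in> set (filter (\<lambda>i. Suc i \<in> set (take k \<sigma>)) [0..<k+l])" using x by simp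
      then have "Suc (x - 1) \<in> set (map Suc (filter (\<lambda>i. Suc i \<in> set (take k \<sigma>)) [0..<k+l]))"
        by (simp del: Suc_pred)
      then show "x \<in> set (map Suc (filter (\<lambda>i. Suc i \<in> set (take k \<sigma>)) [0..<k+l]))"
        using \<open>x = Suc (x - 1)\<close> by metis
    qed
  qed
  have e2: "set (map Suc (filter (\<lambda>i. Suc i \<notin> set (take k \<sigma>)) [0..<k+l])) = set (drop k \<sigma>)"
  proof
    show "set (map Suc (filter (\<lambda>i. Suc i \<notin> set (take k \<sigma>)) [0..<k+l])) \<subseteq> set (drop k \<sigma>)"
      unfolding sd by auto
    show "set (drop k \<sigma>) \<subseteq> set (map Suc (filter (\<lambda>i. Suc i \<notin> set (take k \<sigma>)) [0..<k+l]))"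
    proof
      fix x assume x: "x \<in> set (drop k \<sigma>)"
      then have "x \<in> {1..k+l}" "x \<notin> set (take k \<sigma>)" using sd by auto
      then have "x = Suc (x - 1)" "x - 1 < k + l" "Suc (x - 1) \<notin> set (take k \<sigma>)" by auto
      then have "x - 1 \<in> set (filter (\<lambda>i. Suc i \<notin> set (take k \<sigma>)) [0..<k+l])" by simp
      then have "Suc (x - 1) \<in> set (map Suc (filter (\<lambda>i. Suc i \<notin> set (take k \<sigma>)) [0..<k+l]))"
        by (simp del: Suc_pred)
      then show "x \<in> set (map Suc (filter (\<lambda>i. Suc i \<notin> set (take k \<sigma>)) [0..<k+l]))"
        using \<open>x = Suc (x - 1)\<close> by metis
    qed
  qed
  have so1: "sorted_wrt (<) (map Suc (filter (\<lambda>i. Suc i \<in> set (take k \<sigma>)) [0..<k+l]))"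
    by (simp add: sorted_wrt_map) (rule sorted_wrt_filter, simp)
  have so2: "sorted_wrt (<) (map Suc (filter (\<lambda>i. Suc i \<notin> set (take k \<sigma>)) [0..<k+l]))"
    by (simp add: sorted_wrt_map) (rule sorted_wrt_filter, simp)
  show r1: "map Suc (filter (\<lambda>i. Suc i \<in> set (take k \<sigma>)) [0..<k+l]) = take k \<sigma>"
    using strict_sorted_equal[OF so1 f(4) e1[symmetric]] by simp
  show r2: "map Suc (filter (\<lambda>i. Suc i \<notin> set (take k \<sigma>)) [0..<k+l]) = drop k \<sigma>"
    using strict_sorted_equal[OF so2 f(5) e2[symmetric]] by simp
  show "shof (k + l) {i. Suc i \<in> set (take k \<sigma>)} = \<sigma>"
    unfolding shof_def using r1 r2 by simp
qed


lemma card_sh_comp: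
  assumes lt: "length t = k + l" and lu: "length u = k" and lw: "length w = l"
  shows "card {\<sigma> \<in> sh k l. comp_map t \<sigma> = u @ w} = card (P t u w)"
proof -
  have lenA: "length (filter (\<lambda>i. i \<in> A) [0..<k+l]) = k" if "A \<in> P t u w" for A
    using that lu lt by (metis (mono_tags, lifting) P_def mem_Collect_eq nths_filter length_map)
  have inj: "inj_on (shof (k + l)) (P t u w)"
  proof (rule inj_onI)
    fix A B assume A: "A \<in> P t u w" and B: "B \<in> P t u w" and e: "shof (k + l) A = shof (k + l) B"
    have "A = {i. Suc i \<in> set (take k (shof (k+l) A))}"
      using g_shof[of A "k+l" k] A lenA[OF A] lt by (auto simp: P_def)
    also have "\<dots> = B" unfolding e
      using g_shof[of B "k+l" k] B lenA[OF B] lt by (auto simp: P_def)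
    finally show "A = B" .
  qed
  have img: "shof (k + l) ` P t u w = {\<sigma> \<in> sh k l. comp_map t \<sigma> = u @ w}"
  proof (intro equalityI subsetI)
    fix \<sigma> assume "\<sigma> \<in> shof (k + l) ` P t u w"
    then obtain A where A: "A \<in> P t u w" and s: "\<sigma> = shof (k + l) A" by auto
    have "\<sigma> \<in> sh k l" using shof_in_sh[OF lenA[OF A]] s by simp
    moreover have "comp_map t \<sigma> = u @ w" using comp_shof[of t A] s A lt by (simp add: P_def)
    ultimately show "\<sigma> \<in> {\<sigma> \<in> sh k l. comp_map t \<sigma> = u @ w}" by simp
  next
    fix \<sigma> assume "\<sigma> \<in> {\<sigma> \<in> sh k l. comp_map t \<sigma> = u @ w}"
    then have sh: "\<sigma> \<in> sh k l" and c: "comp_map t \<sigma> = u @ w" by auto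
    define A where "A = {i. Suc i \<in> set (take k \<sigma>)}"
    note g = shof_g[OF sh, folded A_def]
    have len: "length (nths t A) = k"
    proof -
      have "length (nths t A) = length (filter (\<lambda>i. i \<in> A) [0..<k+l])" by (simp add: nths_filter lt)
      also have "\<dots> = length (take k \<sigma>)"
        using arg_cong[OF g(1), of length] unfolding A_def by simp
      also have "\<dots> = k" using sh_facts(1)[OF sh] by simp
      finally show ?thesis .
    qed
    have "nths t A @ nths t (- A) = u @ w" using c comp_shof[of t A] g(3) lt by simp
    then have "nths t A = u" "nths t (- A) = w" using len lu by (auto simp: append_eq_append_conv)
    moreover have "A \<subseteq> {..<length t}"
    proof
      fix i assume "i \<in> A"
      then have "Suc i \<in> set \<sigma>" unfolding A_def using set_take_subset by fastforce
      then show "i \<in> {..<length t}" using sh_facts(2)[OF sh] lt by auto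
    qed
    ultimately have "A \<in> P t u w" unfolding P_def by blast
    then show "\<sigma> \<in> shof (k + l) ` P t u w" using g(3) by (metis image_eqI)
  qed
  show ?thesis using card_image[OF inj] img by simp
qed



definition std :: "nat list \<Rightarrow> nat list \<Rightarrow> nat list" where
  "std \<rho> \<sigma> = map (\<lambda>i. \<rho> ! (i - 1)) \<sigma>"

lemma map_fact_map_inj:
  assumes "inj_on h (set xs)"
  shows "map_fact (map h xs) = map_fact xs"
proof -
  have "map_fact (map h xs) = (\<Prod>y\<in>h ` set xs. fact (count_list (map h xs) y))"
    unfolding map_fact_def by simp
  also have "\<dots> = (\<Prod>i\<in>set xs. fact (count_list (map h xs) (h i)))"
    by (rule prod.reindex[OF assms, unfolded comp_def])
  also have "\<dots> = (\<Prod>i\<in>set xs. fact (count_list xs i))"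
    by (intro prod.cong refl) (simp add: count_list_inj_map[OF assms])
  finally show ?thesis unfolding map_fact_def .
qed

lemma h_less:
  fixes \<rho> :: "nat list"
  assumes "sorted_wrt (<) \<rho>" "i \<in> {1..length \<rho>}" "j \<in> {1..length \<rho>}" "i < j"
  shows "\<rho> ! (i - 1) < \<rho> ! (j - 1)"
  using sorted_wrt_nth_less[OF assms(1), of "i - 1" "j - 1"] assms by auto

lemma h_bij:
  fixes \<rho> :: "nat list"
  assumes "sorted_wrt (<) \<rho>"
  shows "bij_betw (\<lambda>i. \<rho> ! (i - 1)) {1..length \<rho>} (set \<rho>)"
proof (rule bij_betwI')
  fix i j assume "i \<in> {1..length \<rho>}" "j \<in> {1..length \<rho>}"
  note ij = this
  show "(\<rho> ! (i - 1) = \<rho> ! (j - 1)) = (i = j)"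
  proof
    assume e: "\<rho> ! (i - 1) = \<rho> ! (j - 1)"
    show "i = j"
    proof (rule ccontr)
      assume "i \<noteq> j"
      then consider "i < j" | "j < i" by linarith
      then show False
      proof cases
        case 1
        have "\<rho> ! (i - 1) < \<rho> ! (j - 1)" by (rule h_less[OF assms ij 1])
        then show False using e by simp
      next
        case 2
        have "\<rho> ! (j - 1) < \<rho> ! (i - 1)" by (rule h_less[OF assms ij(2,1) 2])
        then show False using e by simp
      qed
    qed
  qed simp
next
  fix i assume "i \<in> {1..length \<rho>}" then show "\<rho> ! (i - 1) \<in> set \<rho>" by auto
next
  fix y assume "y \<in> set \<rho>"
  then obtain j where "j < length \<rho>" "y = \<rho> ! j" by (auto simp: in_set_conv_nth)
  then show "\<exists>i\<in>{1..length \<rho>}. y = \<rho> ! (i - 1)" by (intro bexI[of _ "Suc j"]) auto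
qed

lemma std_props:
  assumes r: "sorted_wrt (<) \<rho>" and s: "sorted \<sigma>" and ss: "set \<sigma> = {1..length \<rho>}"
  shows "sorted (std \<rho> \<sigma>)" "set (std \<rho> \<sigma>) = set \<rho>" "map_fact (std \<rho> \<sigma>) = map_fact \<sigma>"
    "length (std \<rho> \<sigma>) = length \<sigma>"
proof -
  have b: "bij_betw (\<lambda>i. \<rho> ! (i - 1)) {1..length \<rho>} (set \<rho>)" by (rule h_bij[OF r])
  show "set (std \<rho> \<sigma>) = set \<rho>" unfolding std_def using b ss by (simp add: bij_betw_def)
  show "map_fact (std \<rho> \<sigma>) = map_fact \<sigma>" unfolding std_def
    by (rule map_fact_map_inj) (use b ss in \<open>simp add: bij_betw_def\<close>)
  show "length (std \<rho> \<sigma>) = length \<sigma>" by (simp add: std_def)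
  have "sorted_wrt (\<lambda>x y. \<rho> ! (x - 1) \<le> \<rho> ! (y - 1)) \<sigma>"
  proof (rule sorted_wrt_mono_rel[of _ "(\<le>)"])
    fix x y assume "x \<in> set \<sigma>" "y \<in> set \<sigma>" "x \<le> y"
    then show "\<rho> ! (x - 1) \<le> \<rho> ! (y - 1)"
      using h_less[OF r, of x y] ss by (cases "x = y") auto
  qed (use s in auto)
  then show "sorted (std \<rho> \<sigma>)" unfolding std_def by (simp add: sorted_wrt_map)
qed

lemma std_inj:
  assumes r: "sorted_wrt (<) \<rho>" "sorted_wrt (<) \<rho>'"
    and ss: "set \<sigma> = {1..length \<rho>}" "set \<sigma>' = {1..length \<rho>'}"
    and s: "sorted \<sigma>" "sorted \<sigma>'"
    and e: "std \<rho> \<sigma> = std \<rho>' \<sigma>'"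
  shows "\<rho> = \<rho>'" "\<sigma> = \<sigma>'"
proof -
  have "set \<rho> = set \<rho>'" using std_props(2)[OF r(1) s(1) ss(1)] std_props(2)[OF r(2) s(2) ss(2)] e by simp
  then show rr: "\<rho> = \<rho>'" using strict_sorted_equal[OF r(2) r(1)] by simp
  have b: "bij_betw (\<lambda>i. \<rho> ! (i - 1)) {1..length \<rho>} (set \<rho>)" by (rule h_bij[OF r(1)])
  have "inj_on (\<lambda>i. \<rho> ! (i - 1)) (set \<sigma> \<union> set \<sigma>')" using b ss rr by (simp add: bij_betw_def)
  moreover have "map (\<lambda>i. \<rho> ! (i - 1)) \<sigma> = map (\<lambda>i. \<rho> ! (i - 1)) \<sigma>'" using e rr by (simp add: std_def)
  ultimately show "\<sigma> = \<sigma>'" using map_inj_on by blast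
qed

lemma std_exists:
  assumes v: "sorted v"
  shows "\<exists>\<rho> \<sigma>. sorted_wrt (<) \<rho> \<and> set \<rho> = set v \<and> sorted \<sigma> \<and> set \<sigma> = {1..length \<rho>}
      \<and> length \<sigma> = length v \<and> std \<rho> \<sigma> = v"
proof -
  define \<rho> where "\<rho> = sorted_list_of_set (set v)"
  have r: "sorted_wrt (<) \<rho>" unfolding \<rho>_def by (rule strict_sorted_list_of_set)
  have sr: "set \<rho> = set v" unfolding \<rho>_def by simp
  define h where "h = (\<lambda>i. \<rho> ! (i - 1))"
  have b: "bij_betw h {1..length \<rho>} (set \<rho>)" unfolding h_def by (rule h_bij[OF r])
  define g where "g = the_inv_into {1..length \<rho>} h"
  have bg: "bij_betw g (set \<rho>) {1..length \<rho>}" unfolding g_def by (rule bij_betw_the_inv_into[OF b])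
  have hg: "h (g y) = y" if "y \<in> set \<rho>" for y
    unfolding g_def using that b by (simp add: bij_betw_def f_the_inv_into_f)
  define \<sigma> where "\<sigma> = map g v"
  have "set \<sigma> = {1..length \<rho>}" unfolding \<sigma>_def using bg sr by (simp add: bij_betw_def)
  moreover have "std \<rho> \<sigma> = v"
  proof -
    have "map (\<lambda>x. h (g x)) v = v" by (rule map_idI) (use hg sr in auto)
    then show ?thesis unfolding std_def \<sigma>_def h_def by (simp add: comp_def)
  qed
  moreover have "sorted \<sigma>"
  proof -
    have "sorted_wrt (\<lambda>x y. g x \<le> g y) v"
    proof (rule sorted_wrt_mono_rel[of _ "(\<le>)"])
      fix x y assume xy: "x \<in> set v" "y \<in> set v" "x \<le> y"
      show "g x \<le> g y"
      proof (rule ccontr)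
        assume "\<not> g x \<le> g y"
        then have "g y < g x" by simp
        moreover have "g x \<in> {1..length \<rho>}" "g y \<in> {1..length \<rho>}"
          using bg xy sr by (auto simp: bij_betw_def)
        ultimately have "h (g y) < h (g x)" unfolding h_def using h_less[OF r] by blast
        then have "y < x" using hg xy sr by simp
        then show False using xy by simp
      qed
    qed (use v in auto)
    then show ?thesis unfolding \<sigma>_def by (simp add: sorted_wrt_map)
  qed
  moreover have "length \<sigma> = length v" by (simp add: \<sigma>_def)
  ultimately show ?thesis using r sr by blast
qed



lemma mx_interval: "set xs = {1..m} \<Longrightarrow> mx xs = m"
proof -
  assume "set xs = {1..m}"
  then have "insert 0 (set xs) = {0..m}" by auto
  moreover have "Max {0..m} = m" by (rule Max_eqI) auto
  ultimately show ?thesis unfolding mx_def by simp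
qed

lemma surj_subset: "surj_onto_interval xs \<Longrightarrow> set xs \<subseteq> {1..length xs}"
proof -
  assume "surj_onto_interval xs"
  then obtain m where m: "set xs = {1..m}" by (auto simp: surj_onto_interval_def)
  have "m = card (set xs)" using m by simp
  also have "\<dots> \<le> length xs" by (rule card_length)
  finally show ?thesis using m by auto
qed

lemma finite_surj_len: "finite {xs. length xs = n \<and> surj_onto_interval xs}"
  by (rule finite_subset[OF _ finite_lists_length_eq[OF finite_atLeastAtMost[of 1 n], of n]])
     (use surj_subset in fastforce)

lemma finite_inc: "finite (inc k)"
  by (rule finite_subset[OF _ finite_surj_len[of k]]) (auto simp: inc_def)

lemma finite_qsh: "finite (qsh a b)"
  by (rule finite_subset[OF _ finite_surj_len[of "a + b"]]) (auto simp: qsh_def)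

lemma finite_sh: "finite (sh a b)"
  using finite_qsh[of a b] by (simp add: sh_def)

lemma inc_facts:
  assumes "\<sigma> \<in> inc k"
  shows "length \<sigma> = k" "sorted \<sigma>" "set \<sigma> = {1..mx \<sigma>}"
proof -
  from assms obtain m where "set \<sigma> = {1..m}" "length \<sigma> = k" "sorted \<sigma>"
    by (auto simp: inc_def surj_onto_interval_def)
  then show "length \<sigma> = k" "sorted \<sigma>" "set \<sigma> = {1..mx \<sigma>}" using mx_interval by auto
qed

lemma qsh_facts:
  assumes "\<tau> \<in> qsh a b"
  shows "length \<tau> = a + b" "sorted_wrt (<) (take a \<tau>)" "sorted_wrt (<) (drop a \<tau>)"
    "surj_onto_interval \<tau>" "length (take a \<tau>) = a" "length (drop a \<tau>) = b"
  using assms by (auto simp: qsh_def)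

lemma comp_tensor:
  assumes s1: "\<sigma>1 \<in> inc k" and s2: "\<sigma>2 \<in> inc l" and t: "\<tau> \<in> qsh (mx \<sigma>1) (mx \<sigma>2)"
  shows "comp_map \<tau> (tensor \<sigma>1 \<sigma>2) = std (take (mx \<sigma>1) \<tau>) \<sigma>1 @ std (drop (mx \<sigma>1) \<tau>) \<sigma>2"
proof -
  note f1 = inc_facts[OF s1] and f2 = inc_facts[OF s2] and ft = qsh_facts[OF t]
  have a: "map (\<lambda>i. \<tau> ! (i - 1)) \<sigma>1 = map (\<lambda>i. take (mx \<sigma>1) \<tau> ! (i - 1)) \<sigma>1"
    by (rule map_cong[OF refl]) (use f1(3) in auto)
  have b: "map (\<lambda>y. \<tau> ! (mx \<sigma>1 + y - 1)) \<sigma>2 = map (\<lambda>i. drop (mx \<sigma>1) \<tau> ! (i - 1)) \<sigma>2"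
  proof (rule map_cong[OF refl])
    fix y assume "y \<in> set \<sigma>2"
    then have "1 \<le> y" "y \<le> mx \<sigma>2" using f2(3) by auto
    then show "\<tau> ! (mx \<sigma>1 + y - 1) = drop (mx \<sigma>1) \<tau> ! (y - 1)"
      using ft(1) by (simp add: nth_drop)
  qed
  show ?thesis unfolding comp_map_def tensor_def std_def using a b by (simp add: comp_def)
qed

definition FF :: "nat \<Rightarrow> nat \<Rightarrow> nat list set" where
  "FF k l = {f. length f = k + l \<and> surj_onto_interval f \<and> sorted (take k f) \<and> sorted (drop k f)}"

definition WW :: "nat \<Rightarrow> nat list \<Rightarrow> rat" where
  "WW k f = 1 / (of_nat (map_fact (take k f)) * of_nat (map_fact (drop k f)))"

lemma finite_FF: "finite (FF k l)"
  by (rule finite_subset[OF _ finite_surj_len[of "k + l"]]) (auto simp: FF_def)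

definition TT :: "nat \<Rightarrow> nat \<Rightarrow> (nat list \<times> nat list \<times> nat list) set" where
  "TT k l = (SIGMA \<sigma>1:inc k. SIGMA \<sigma>2:inc l. qsh (mx \<sigma>1) (mx \<sigma>2))"

definition GG :: "nat list \<times> nat list \<times> nat list \<Rightarrow> nat list" where
  "GG x = (case x of (\<sigma>1, \<sigma>2, \<tau>) \<Rightarrow> comp_map \<tau> (tensor \<sigma>1 \<sigma>2))"

lemma GG_props:
  assumes "(\<sigma>1, \<sigma>2, \<tau>) \<in> TT k l"
  shows "GG (\<sigma>1, \<sigma>2, \<tau>) \<in> FF k l"
    "WW k (GG (\<sigma>1, \<sigma>2, \<tau>)) = 1 / (of_nat (map_fact \<sigma>1) * of_nat (map_fact \<sigma>2))"
proof -
  have s1: "\<sigma>1 \<in> inc k" and s2: "\<sigma>2 \<in> inc l" and t: "\<tau> \<in> qsh (mx \<sigma>1) (mx \<sigma>2)"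
    using assms by (auto simp: TT_def)
  note f1 = inc_facts[OF s1] and f2 = inc_facts[OF s2] and ft = qsh_facts[OF t]
  let ?r1 = "take (mx \<sigma>1) \<tau>" and ?r2 = "drop (mx \<sigma>1) \<tau>"
  have p1: "sorted (std ?r1 \<sigma>1)" "set (std ?r1 \<sigma>1) = set ?r1" "map_fact (std ?r1 \<sigma>1) = map_fact \<sigma>1"
    "length (std ?r1 \<sigma>1) = length \<sigma>1"
    using std_props[OF ft(2) f1(2)] f1(3) ft(5) by auto
  have p2: "sorted (std ?r2 \<sigma>2)" "set (std ?r2 \<sigma>2) = set ?r2" "map_fact (std ?r2 \<sigma>2) = map_fact \<sigma>2"
    "length (std ?r2 \<sigma>2) = length \<sigma>2"
    using std_props[OF ft(3) f2(2)] f2(3) ft(6) by auto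
  have G: "GG (\<sigma>1, \<sigma>2, \<tau>) = std ?r1 \<sigma>1 @ std ?r2 \<sigma>2"
    unfolding GG_def using comp_tensor[OF s1 s2 t] by simp
  have tk: "take k (GG (\<sigma>1, \<sigma>2, \<tau>)) = std ?r1 \<sigma>1" and dk: "drop k (GG (\<sigma>1, \<sigma>2, \<tau>)) = std ?r2 \<sigma>2"
    unfolding G using p1(4) f1(1) by auto
  have "set (GG (\<sigma>1, \<sigma>2, \<tau>)) = set \<tau>"
  proof -
    have "set (GG (\<sigma>1, \<sigma>2, \<tau>)) = set ?r1 \<union> set ?r2" unfolding G using p1(2) p2(2) by simp
    also have "\<dots> = set \<tau>" by (metis append_take_drop_id set_append)
    finally show ?thesis .
  qed
  then have "surj_onto_interval (GG (\<sigma>1, \<sigma>2, \<tau>))" using ft(4) by (simp add: surj_onto_interval_def)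
  moreover have "length (GG (\<sigma>1, \<sigma>2, \<tau>)) = k + l" unfolding G using p1(4) p2(4) f1(1) f2(1) by simp
  ultimately show "GG (\<sigma>1, \<sigma>2, \<tau>) \<in> FF k l" unfolding FF_def using tk dk p1(1) p2(1) by simp
  show "WW k (GG (\<sigma>1, \<sigma>2, \<tau>)) = 1 / (of_nat (map_fact \<sigma>1) * of_nat (map_fact \<sigma>2))"
    unfolding WW_def tk dk p1(3) p2(3) ..
qed


lemma GG_split:
  assumes "(\<sigma>1, \<sigma>2, \<tau>) \<in> TT k l"
  shows "take k (GG (\<sigma>1, \<sigma>2, \<tau>)) = std (take (mx \<sigma>1) \<tau>) \<sigma>1"
    "drop k (GG (\<sigma>1, \<sigma>2, \<tau>)) = std (drop (mx \<sigma>1) \<tau>) \<sigma>2"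
proof -
  have s1: "\<sigma>1 \<in> inc k" and s2: "\<sigma>2 \<in> inc l" and t: "\<tau> \<in> qsh (mx \<sigma>1) (mx \<sigma>2)"
    using assms by (auto simp: TT_def)
  have G: "GG (\<sigma>1, \<sigma>2, \<tau>) = std (take (mx \<sigma>1) \<tau>) \<sigma>1 @ std (drop (mx \<sigma>1) \<tau>) \<sigma>2"
    unfolding GG_def using comp_tensor[OF s1 s2 t] by simp
  have "length (std (take (mx \<sigma>1) \<tau>) \<sigma>1) = k" using inc_facts(1)[OF s1] by (simp add: std_def)
  then show "take k (GG (\<sigma>1, \<sigma>2, \<tau>)) = std (take (mx \<sigma>1) \<tau>) \<sigma>1"
    "drop k (GG (\<sigma>1, \<sigma>2, \<tau>)) = std (drop (mx \<sigma>1) \<tau>) \<sigma>2" unfolding G by auto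
qed

lemma GG_inj: "inj_on GG (TT k l)"
proof (rule inj_onI)
  fix x y assume x: "x \<in> TT k l" and y: "y \<in> TT k l" and e: "GG x = GG y"
  obtain \<sigma>1 \<sigma>2 \<tau> where xe: "x = (\<sigma>1, \<sigma>2, \<tau>)" by (cases x) auto
  obtain \<sigma>1' \<sigma>2' \<tau>' where ye: "y = (\<sigma>1', \<sigma>2', \<tau>')" by (cases y) auto
  have s1: "\<sigma>1 \<in> inc k" and s2: "\<sigma>2 \<in> inc l" and t: "\<tau> \<in> qsh (mx \<sigma>1) (mx \<sigma>2)"
    using x xe by (auto simp: TT_def)
  have s1': "\<sigma>1' \<in> inc k" and s2': "\<sigma>2' \<in> inc l" and t': "\<tau>' \<in> qsh (mx \<sigma>1') (mx \<sigma>2')"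
    using y ye by (auto simp: TT_def)
  note f1 = inc_facts[OF s1] and f2 = inc_facts[OF s2] and ft = qsh_facts[OF t]
  note f1' = inc_facts[OF s1'] and f2' = inc_facts[OF s2'] and ft' = qsh_facts[OF t']
  have e1: "std (take (mx \<sigma>1) \<tau>) \<sigma>1 = std (take (mx \<sigma>1') \<tau>') \<sigma>1'"
    using GG_split(1)[OF x[unfolded xe]] GG_split(1)[OF y[unfolded ye]] e xe ye by simp
  have e2: "std (drop (mx \<sigma>1) \<tau>) \<sigma>2 = std (drop (mx \<sigma>1') \<tau>') \<sigma>2'"
    using GG_split(2)[OF x[unfolded xe]] GG_split(2)[OF y[unfolded ye]] e xe ye by simp
  have r1: "take (mx \<sigma>1) \<tau> = take (mx \<sigma>1') \<tau>'" "\<sigma>1 = \<sigma>1'"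
    using std_inj[OF ft(2) ft'(2) _ _ f1(2) f1'(2) e1] f1(3) f1'(3) ft(5) ft'(5) by auto
  have r2: "drop (mx \<sigma>1) \<tau> = drop (mx \<sigma>1') \<tau>'" "\<sigma>2 = \<sigma>2'"
    using std_inj[OF ft(3) ft'(3) _ _ f2(2) f2'(2) e2] f2(3) f2'(3) ft(6) ft'(6) by auto
  have "\<tau> = \<tau>'" by (metis append_take_drop_id r1(1) r2(1))
  then show "x = y" using xe ye r1 r2 by simp
qed

lemma GG_surj:
  assumes f: "f \<in> FF k l"
  shows "\<exists>x\<in>TT k l. GG x = f"
proof -
  have lf: "length f = k + l" and su: "surj_onto_interval f" and so: "sorted (take k f)" "sorted (drop k f)"
    using f by (auto simp: FF_def)
  obtain \<rho>1 \<sigma>1 where a: "sorted_wrt (<) \<rho>1" "set \<rho>1 = set (take k f)" "sorted \<sigma>1"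
    "set \<sigma>1 = {1..length \<rho>1}" "length \<sigma>1 = length (take k f)" "std \<rho>1 \<sigma>1 = take k f"
    using std_exists[OF so(1)] by blast
  obtain \<rho>2 \<sigma>2 where b: "sorted_wrt (<) \<rho>2" "set \<rho>2 = set (drop k f)" "sorted \<sigma>2"
    "set \<sigma>2 = {1..length \<rho>2}" "length \<sigma>2 = length (drop k f)" "std \<rho>2 \<sigma>2 = drop k f"
    using std_exists[OF so(2)] by blast
  have m1: "mx \<sigma>1 = length \<rho>1" by (rule mx_interval[OF a(4)])
  have m2: "mx \<sigma>2 = length \<rho>2" by (rule mx_interval[OF b(4)])
  have s1: "\<sigma>1 \<in> inc k" using a lf by (auto simp: inc_def surj_onto_interval_def)
  have s2: "\<sigma>2 \<in> inc l" using b lf by (auto simp: inc_def surj_onto_interval_def)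
  have st: "set (\<rho>1 @ \<rho>2) = set f" using a(2) b(2) by (metis append_take_drop_id set_append)
  have t: "\<rho>1 @ \<rho>2 \<in> qsh (mx \<sigma>1) (mx \<sigma>2)"
    using a(1) b(1) st su m1 m2 by (auto simp: qsh_def surj_onto_interval_def)
  have x: "(\<sigma>1, \<sigma>2, \<rho>1 @ \<rho>2) \<in> TT k l" using s1 s2 t by (auto simp: TT_def)
  have "GG (\<sigma>1, \<sigma>2, \<rho>1 @ \<rho>2) = comp_map (\<rho>1 @ \<rho>2) (tensor \<sigma>1 \<sigma>2)" by (simp add: GG_def)
  also have "\<dots> = std (take (mx \<sigma>1) (\<rho>1 @ \<rho>2)) \<sigma>1 @ std (drop (mx \<sigma>1) (\<rho>1 @ \<rho>2)) \<sigma>2"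
    by (rule comp_tensor[OF s1 s2 t])
  also have "\<dots> = std \<rho>1 \<sigma>1 @ std \<rho>2 \<sigma>2" using m1 by simp
  also have "\<dots> = f" using a(6) b(6) by simp
  finally show ?thesis using x by blast
qed

lemma GG_bij: "bij_betw GG (TT k l) (FF k l)"
  unfolding bij_betw_def
proof
  show "inj_on GG (TT k l)" by (rule GG_inj)
  show "GG ` TT k l = FF k l"
  proof (intro equalityI subsetI)
    fix f assume "f \<in> GG ` TT k l"
    then obtain x where "x \<in> TT k l" "f = GG x" by auto
    then show "f \<in> FF k l" using GG_props(1) by (cases x) auto
  next
    fix f assume "f \<in> FF k l"
    then show "f \<in> GG ` TT k l" using GG_surj by force
  qed
qed



lemma map_fact_pos: "map_fact xs > 0"
  unfolding map_fact_def by (rule prod_pos) simp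

lemma mset_comp:
  assumes s: "\<sigma> \<in> sh k l" and lt: "length \<tau> = k + l"
  shows "mset (comp_map \<tau> \<sigma>) = mset \<tau>"
proof -
  note f = sh_facts[OF s]
  have "mset \<sigma> = mset [1..<Suc (k+l)]"
    using set_eq_iff_mset_eq_distinct[of \<sigma> "[1..<Suc (k+l)]"] f(2,3) by auto
  then have "mset (comp_map \<tau> \<sigma>) = mset (map (\<lambda>i. \<tau> ! (i - 1)) [1..<Suc (k+l)])"
    unfolding comp_map_def by simp
  also have "map (\<lambda>i. \<tau> ! (i - 1)) [1..<Suc (k+l)] = map (\<lambda>i. \<tau> ! (i - 1)) (map Suc [0..<k+l])"
    by (simp add: map_Suc_upt)
  also have "\<dots> = map (\<lambda>i. \<tau> ! i) [0..<length \<tau>]" using lt by simp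
  also have "\<dots> = \<tau>" by (rule map_nth)
  finally show ?thesis .
qed

lemma comp_in_FF:
  assumes s: "\<sigma> \<in> sh k l" and t: "\<tau> \<in> inc (k + l)"
  shows "comp_map \<tau> \<sigma> \<in> FF k l"
proof -
  note f = sh_facts[OF s] and ft = inc_facts[OF t]
  have ms: "mset (comp_map \<tau> \<sigma>) = mset \<tau>" by (rule mset_comp[OF s ft(1)])
  then have "set (comp_map \<tau> \<sigma>) = set \<tau>" by (metis set_mset_mset)
  then have su: "surj_onto_interval (comp_map \<tau> \<sigma>)" using ft(3) by (auto simp: surj_onto_interval_def)
  have mono: "\<tau> ! (x - 1) \<le> \<tau> ! (y - 1)" if "x \<in> set \<sigma>" "y \<in> set \<sigma>" "x < y" for x y
    using sorted_nth_mono[OF ft(2), of "x - 1" "y - 1"] that f(2) ft(1) by auto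
  have "sorted (map (\<lambda>i. \<tau> ! (i - 1)) (take k \<sigma>))"
  proof -
    have "sorted_wrt (\<lambda>x y. \<tau> ! (x - 1) \<le> \<tau> ! (y - 1)) (take k \<sigma>)"
      by (rule sorted_wrt_mono_rel[OF _ f(4)]) (use mono in \<open>auto dest: in_set_takeD\<close>)
    then show ?thesis by (simp add: sorted_wrt_map)
  qed
  moreover have "sorted (map (\<lambda>i. \<tau> ! (i - 1)) (drop k \<sigma>))"
  proof -
    have "sorted_wrt (\<lambda>x y. \<tau> ! (x - 1) \<le> \<tau> ! (y - 1)) (drop k \<sigma>)"
      by (rule sorted_wrt_mono_rel[OF _ f(5)]) (use mono in \<open>auto dest: in_set_dropD\<close>)
    then show ?thesis by (simp add: sorted_wrt_map)
  qed
  ultimately show ?thesis using su f(1) unfolding FF_def comp_map_def by (simp add: take_map drop_map)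
qed

lemma tau_unique:
  assumes s: "\<sigma> \<in> sh k l" and t: "\<tau> \<in> inc (k + l)" and c: "comp_map \<tau> \<sigma> = f"
  shows "\<tau> = sort f"
  using properties_for_sort[of \<tau> f] mset_comp[OF s inc_facts(1)[OF t]] c inc_facts(2)[OF t] by simp

lemma sort_in_inc: "f \<in> FF k l \<Longrightarrow> sort f \<in> inc (k + l)"
  by (auto simp: FF_def inc_def surj_onto_interval_def)

lemma RHS_eq:
  "(\<Sum>\<sigma>\<in>sh k l. \<Sum>\<tau>\<in>inc (k + l).
      Poly_Mapping.single (comp_map \<tau> \<sigma>) (1 / of_nat (map_fact \<tau>) :: rat))
   = (\<Sum>f\<in>FF k l. Poly_Mapping.single f (WW k f))"
proof (rule poly_mapping_eqI)
  fix f0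
  have L: "Poly_Mapping.lookup (\<Sum>\<sigma>\<in>sh k l. \<Sum>\<tau>\<in>inc (k + l).
      Poly_Mapping.single (comp_map \<tau> \<sigma>) (1 / of_nat (map_fact \<tau>) :: rat)) f0
    = (\<Sum>\<sigma>\<in>sh k l. \<Sum>\<tau>\<in>inc (k + l). if comp_map \<tau> \<sigma> = f0 then 1 / of_nat (map_fact \<tau>) else 0)"
    by (simp add: lookup_sum lookup_single when_def)
  have R: "Poly_Mapping.lookup (\<Sum>f\<in>FF k l. Poly_Mapping.single f (WW k f)) f0 = (if f0 \<in> FF k l then WW k f0 else 0)"
    by (simp add: lookup_sum lookup_single when_def finite_FF)
  show "Poly_Mapping.lookup (\<Sum>\<sigma>\<in>sh k l. \<Sum>\<tau>\<in>inc (k + l).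
      Poly_Mapping.single (comp_map \<tau> \<sigma>) (1 / of_nat (map_fact \<tau>) :: rat)) f0
    = Poly_Mapping.lookup (\<Sum>f\<in>FF k l. Poly_Mapping.single f (WW k f)) f0"
  proof (cases "f0 \<in> FF k l")
    case False
    have "(\<Sum>\<sigma>\<in>sh k l. \<Sum>\<tau>\<in>inc (k + l). if comp_map \<tau> \<sigma> = f0 then 1 / of_nat (map_fact \<tau>) else (0::rat)) = 0"
      by (intro sum.neutral ballI) (use comp_in_FF False in fastforce)
    then show ?thesis unfolding L R using False by simp
  next
    case True
    define t where "t = sort f0"
    define u where "u = take k f0"
    define w where "w = drop k f0"
    have lf: "length f0 = k + l" and so: "sorted u" "sorted w" using True by (auto simp: FF_def u_def w_def)
    have tinc: "t \<in> inc (k + l)" unfolding t_def by (rule sort_in_inc[OF True])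
    have inner: "(\<Sum>\<tau>\<in>inc (k + l). if comp_map \<tau> \<sigma> = f0 then 1 / of_nat (map_fact \<tau>) else (0::rat))
        = (if comp_map t \<sigma> = f0 then 1 / of_nat (map_fact t) else 0)" if s: "\<sigma> \<in> sh k l" for \<sigma>
    proof -
      have "(\<Sum>\<tau>\<in>inc (k + l). if comp_map \<tau> \<sigma> = f0 then 1 / of_nat (map_fact \<tau>) else (0::rat))
          = (\<Sum>\<tau>\<in>inc (k + l). if \<tau> = t then (if comp_map t \<sigma> = f0 then 1 / of_nat (map_fact t) else 0) else 0)"
        proof (rule sum.cong[OF refl])
          fix \<tau> assume ti: "\<tau> \<in> inc (k + l)"
          show "(if comp_map \<tau> \<sigma> = f0 then 1 / of_nat (map_fact \<tau>) else (0::rat))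
            = (if \<tau> = t then (if comp_map t \<sigma> = f0 then 1 / of_nat (map_fact t) else 0) else 0)"
          proof (cases "\<tau> = t")
            case False
            have "comp_map \<tau> \<sigma> \<noteq> f0"
            proof
              assume "comp_map \<tau> \<sigma> = f0"
              then have "\<tau> = t" unfolding t_def by (rule tau_unique[OF s ti])
              then show False using False by contradiction
            qed
            then show ?thesis using False by (simp only: if_False)
          qed simp
        qed
      also have "\<dots> = (if comp_map t \<sigma> = f0 then 1 / of_nat (map_fact t) else 0)"
        using tinc finite_inc by simp
      finally show ?thesis .
    qed
    have "(\<Sum>\<sigma>\<in>sh k l. \<Sum>\<tau>\<in>inc (k + l). if comp_map \<tau> \<sigma> = f0 then 1 / of_nat (map_fact \<tau>) else (0::rat))
        = (\<Sum>\<sigma>\<in>sh k l. if comp_map t \<sigma> = f0 then 1 / of_nat (map_fact t) else 0)"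
      by (intro sum.cong refl inner)
    also have "\<dots> = (\<Sum>\<sigma>\<in>{\<sigma> \<in> sh k l. comp_map t \<sigma> = f0}. 1 / of_nat (map_fact t))"
      by (rule sum.inter_filter[symmetric, OF finite_sh])
    also have "\<dots> = of_nat (card {\<sigma> \<in> sh k l. comp_map t \<sigma> = u @ w}) / of_nat (map_fact t)"
      by (simp add: u_def w_def)
    also have "card {\<sigma> \<in> sh k l. comp_map t \<sigma> = u @ w} = card (P t u w)"
      by (rule card_sh_comp) (use lf in \<open>auto simp: t_def u_def w_def\<close>)
    also have "of_nat (card (P t u w)) / of_nat (map_fact t) = WW k f0"
    proof -
      have e: "card (P t u w) * map_fact u * map_fact w = map_fact t"
        by (rule card_P_formula) (use so in \<open>auto simp: t_def u_def w_def\<close>)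
      have "of_nat (card (P t u w)) * of_nat (map_fact u) * of_nat (map_fact w) = (of_nat (map_fact t) :: rat)"
        using arg_cong[OF e, of "of_nat :: nat \<Rightarrow> rat"] by simp
      moreover have "(of_nat (map_fact u) :: rat) > 0" "(of_nat (map_fact w) :: rat) > 0"
        "(of_nat (map_fact t) :: rat) > 0" using map_fact_pos by auto
      ultimately show ?thesis unfolding WW_def u_def[symmetric] w_def[symmetric]
        by (simp add: field_simps)
    qed
    finally show ?thesis unfolding L R using True by simp
  qed
qed



theorem mainTheorem1:
  fixes k l :: nat
  shows "(\<Sum>\<sigma>1\<in>inc k. \<Sum>\<sigma>2\<in>inc l. \<Sum>\<tau>\<in>qsh (mx \<sigma>1) (mx \<sigma>2).
            Poly_Mapping.single (comp_map \<tau> (tensor \<sigma>1 \<sigma>2))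
              (1 / (of_nat (map_fact \<sigma>1) * of_nat (map_fact \<sigma>2)) :: rat))
       = (\<Sum>\<sigma>\<in>sh k l. \<Sum>\<tau>\<in>inc (k + l).
            Poly_Mapping.single (comp_map \<tau> \<sigma>) (1 / of_nat (map_fact \<tau>) :: rat))"
proof -
  define Hf where "Hf = (\<lambda>\<sigma>1 \<sigma>2 \<tau>. Poly_Mapping.single (comp_map \<tau> (tensor \<sigma>1 \<sigma>2))
              (1 / (of_nat (map_fact \<sigma>1) * of_nat (map_fact \<sigma>2)) :: rat))"
  have "(\<Sum>\<sigma>1\<in>inc k. \<Sum>\<sigma>2\<in>inc l. \<Sum>\<tau>\<in>qsh (mx \<sigma>1) (mx \<sigma>2). Hf \<sigma>1 \<sigma>2 \<tau>)
      = (\<Sum>\<sigma>1\<in>inc k. \<Sum>p\<in>(SIGMA \<sigma>2:inc l. qsh (mx \<sigma>1) (mx \<sigma>2)). case_prod (Hf \<sigma>1) p)"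
    by (rule sum.cong[OF refl], rule sum.Sigma) (auto simp: finite_inc finite_qsh)
  also have "\<dots> = (\<Sum>x\<in>TT k l. case_prod (\<lambda>\<sigma>1. case_prod (Hf \<sigma>1)) x)"
    unfolding TT_def by (rule sum.Sigma) (auto simp: finite_inc finite_qsh)
  also have "\<dots> = (\<Sum>x\<in>TT k l. Poly_Mapping.single (GG x) (WW k (GG x)))"
  proof (rule sum.cong[OF refl])
    fix x assume x: "x \<in> TT k l"
    obtain \<sigma>1 \<sigma>2 \<tau> where xe: "x = (\<sigma>1, \<sigma>2, \<tau>)" by (cases x) auto
    show "case_prod (\<lambda>\<sigma>1. case_prod (Hf \<sigma>1)) x = Poly_Mapping.single (GG x) (WW k (GG x))"
      unfolding xe GG_props(2)[OF x[unfolded xe]] by (simp add: Hf_def GG_def)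
  qed
  also have "\<dots> = (\<Sum>f\<in>FF k l. Poly_Mapping.single f (WW k f))"
    by (rule sum.reindex_bij_betw[OF GG_bij])
  also have "\<dots> = (\<Sum>\<sigma>\<in>sh k l. \<Sum>\<tau>\<in>inc (k + l).
            Poly_Mapping.single (comp_map \<tau> \<sigma>) (1 / of_nat (map_fact \<tau>) :: rat))"
    by (rule RHS_eq[symmetric])
  finally show ?thesis unfolding Hf_def .
qed

end
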